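(* Let $d\ge2$, $n\ge1$, let $H$ be a Hermitian operator on $(\mathbb{C}^d)^{\otimes n}$ acting nontrivially only on a $k$-qudit subsystem (i.e. $H=H_S\otimes I_{S^c}$ with $|S|=k$), and let $O$ be a linear operator with $\|O\|_2=1$. Then $$|R_I(H,O)|\le 4k\|H\|_\infty.$$
   Context: Let $V=\mathbb{Z}_d\times\mathbb{Z}_d$; for $a=(s,t)\in V$, $P_a=X^sZ^t$ with $X|j\rangle=|j+1\bmod d\rangle$, $Z|j\rangle=e^{2\pi ij/d}|j\rangle$; $P_{\vec a}=\bigotimes_iP_{a_i}$ and $|\vec a|=\#\{i:a_i\ne(0,0)\}$. $\|A\|_2=(d^{-n}\mathrm{Tr}(A^\dagger A))^{1/2}$. For $\|O\|_2=1$, $P_O[\vec a]=d^{-2n}|\mathrm{Tr}(OP_{\vec a})|^2$ and $I[O]=\sum_{\vec a}|\vec a|P_O[\vec a]$. The influence rate is $R_I(H,O)=\frac{d}{dt}I[U_tOU_t^\dagger]\big|_{t=0}$ with $U_t=e^{-itH}$. $\|\cdot\|_\infty$ is the operator norm. *)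

theory Defs
  imports "HOL-Analysis.Analysis" "HOL-Library.FuncSet"
begin

text \<open>Operators on (C^d)^{\<otimes>n} are represented by their matrices in the computational
  basis. A basis state is a function x with x i < d for i < n (extensional: x i = undefined
  for i >= n). Operator entries outside the basis are irrelevant.\<close>

type_synonym qop = "(nat \<Rightarrow> nat) \<Rightarrow> (nat \<Rightarrow> nat) \<Rightarrow> complex"

definition qbasis :: "nat \<Rightarrow> nat \<Rightarrow> (nat \<Rightarrow> nat) set" where
  "qbasis d n = PiE {..<n} (\<lambda>_. {..<d})"

definition qmult :: "nat \<Rightarrow> nat \<Rightarrow> qop \<Rightarrow> qop \<Rightarrow> qop" where
  "qmult d n A B = (\<lambda>x y. \<Sum>z\<in>qbasis d n. A x z * B z y)"

definition qadj :: "qop \<Rightarrow> qop" where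
  "qadj A = (\<lambda>x y. cnj (A y x))"

definition qid :: qop where
  "qid = (\<lambda>x y. if x = y then 1 else 0)"

definition qtrace :: "nat \<Rightarrow> nat \<Rightarrow> qop \<Rightarrow> complex" where
  "qtrace d n A = (\<Sum>x\<in>qbasis d n. A x x)"

fun qpow :: "nat \<Rightarrow> nat \<Rightarrow> qop \<Rightarrow> nat \<Rightarrow> qop" where
  "qpow d n A 0 = qid"
| "qpow d n A (Suc k) = qmult d n A (qpow d n A k)"

definition qexp :: "nat \<Rightarrow> nat \<Rightarrow> qop \<Rightarrow> qop" where
  "qexp d n A = (\<lambda>x y. \<Sum>k. qpow d n A k x y / of_nat (fact k))"

definition qevol :: "nat \<Rightarrow> nat \<Rightarrow> qop \<Rightarrow> real \<Rightarrow> qop" where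
  "qevol d n H t = qexp d n (\<lambda>x y. - (\<i> * of_real t) * H x y)"

definition hs_norm :: "nat \<Rightarrow> nat \<Rightarrow> qop \<Rightarrow> real" where
  "hs_norm d n A = sqrt (Re (qtrace d n (qmult d n (qadj A) A)) / real d ^ n)"

definition op_norm :: "nat \<Rightarrow> nat \<Rightarrow> qop \<Rightarrow> real" where
  "op_norm d n A = Sup {sqrt (\<Sum>x\<in>qbasis d n. (cmod (\<Sum>y\<in>qbasis d n. A x y * v y))\<^sup>2) | v.
      (\<Sum>y\<in>qbasis d n. (cmod (v y))\<^sup>2) = 1}"

definition hermitian_op :: "nat \<Rightarrow> nat \<Rightarrow> qop \<Rightarrow> bool" where
  "hermitian_op d n H \<longleftrightarrow> (\<forall>x\<in>qbasis d n. \<forall>y\<in>qbasis d n. H x y = cnj (H y x))"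

text \<open>H = H_S \<otimes> I_{S^c}: the matrix entry depends only on the S-components, times
  the identity on the complement.\<close>
definition acts_on :: "nat \<Rightarrow> nat \<Rightarrow> nat set \<Rightarrow> qop \<Rightarrow> bool" where
  "acts_on d n S H \<longleftrightarrow> (\<exists>h :: (nat \<Rightarrow> nat) \<Rightarrow> (nat \<Rightarrow> nat) \<Rightarrow> complex.
     \<forall>x\<in>qbasis d n. \<forall>y\<in>qbasis d n.
       H x y = h (restrict x S) (restrict y S) *
               (if (\<forall>i\<in>{..<n} - S. x i = y i) then 1 else 0))"

text \<open>Single-qudit Weyl operator P_(s,t) = X^s Z^t: <i|X^s Z^t|j> = w^{tj} [i = j+s mod d].\<close>
definition pauli1 :: "nat \<Rightarrow> nat \<times> nat \<Rightarrow> nat \<Rightarrow> nat \<Rightarrow> complex" where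
  "pauli1 d a i j = (if i = (j + fst a) mod d
                     then cis (2 * pi * real (snd a) * real j / real d) else 0)"

definition pauli :: "nat \<Rightarrow> nat \<Rightarrow> (nat \<Rightarrow> nat \<times> nat) \<Rightarrow> qop" where
  "pauli d n a = (\<lambda>x y. \<Prod>i<n. pauli1 d (a i) (x i) (y i))"

definition pauli_idx :: "nat \<Rightarrow> nat \<Rightarrow> (nat \<Rightarrow> nat \<times> nat) set" where
  "pauli_idx d n = PiE {..<n} (\<lambda>_. {..<d} \<times> {..<d})"

definition pweight :: "nat \<Rightarrow> (nat \<Rightarrow> nat \<times> nat) \<Rightarrow> nat" where
  "pweight n a = card {i\<in>{..<n}. a i \<noteq> (0, 0)}"

definition pauli_weight_dist :: "nat \<Rightarrow> nat \<Rightarrow> qop \<Rightarrow> (nat \<Rightarrow> nat \<times> nat) \<Rightarrow> real" where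
  "pauli_weight_dist d n Op a = (cmod (qtrace d n (qmult d n Op (pauli d n a))))\<^sup>2 / real d ^ (2 * n)"

definition influence :: "nat \<Rightarrow> nat \<Rightarrow> qop \<Rightarrow> real" where
  "influence d n Op = (\<Sum>a\<in>pauli_idx d n. real (pweight n a) * pauli_weight_dist d n Op a)"

definition influence_rate :: "nat \<Rightarrow> nat \<Rightarrow> qop \<Rightarrow> qop \<Rightarrow> real" where
  "influence_rate d n H Op = deriv (\<lambda>t. influence d n
      (qmult d n (qmult d n (qevol d n H t) Op) (qadj (qevol d n H t)))) 0"

end

theory Submission
  imports Defs
begin

lemma finite_qbasis[simp]: "finite (qbasis d n)"
  by (simp add: qbasis_def finite_PiE)

lemma qpow_scale:
  "qpow d n (\<lambda>x y. c * A x y) k = (\<lambda>x y. c ^ k * qpow d n A k x y)"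
proof (induction k)
  case 0 then show ?case by (simp add: qid_def)
next
  case (Suc k)
  show ?case
    by (simp add: Suc qmult_def sum_distrib_left mult_ac)
qed

lemma qpow_bound:
  assumes "x \<in> qbasis d n"
  shows "cmod (qpow d n A k x y) \<le> (\<Sum>u\<in>qbasis d n. \<Sum>v\<in>qbasis d n. cmod (A u v)) ^ k"
  using assms
proof (induction k arbitrary: x)
  case 0 then show ?case by (simp add: qid_def)
next
  case (Suc k)
  define C where "C = (\<Sum>u\<in>qbasis d n. \<Sum>v\<in>qbasis d n. cmod (A u v))"
  have C0: "0 \<le> C" unfolding C_def by (intro sum_nonneg) auto
  have rowb: "(\<Sum>v\<in>qbasis d n. cmod (A x v)) \<le> C"
    unfolding C_def using Suc.prems
    by (intro member_le_sum) (auto intro: sum_nonneg)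
  have "cmod (qpow d n A (Suc k) x y) = cmod (\<Sum>z\<in>qbasis d n. A x z * qpow d n A k z y)"
    by (simp add: qmult_def)
  also have "\<dots> \<le> (\<Sum>z\<in>qbasis d n. cmod (A x z) * cmod (qpow d n A k z y))"
    by (rule order_trans[OF norm_sum]) (simp add: norm_mult)
  also have "\<dots> \<le> (\<Sum>z\<in>qbasis d n. cmod (A x z) * C ^ k)"
    using Suc.IH unfolding C_def by (intro sum_mono mult_left_mono) auto
  also have "\<dots> = (\<Sum>z\<in>qbasis d n. cmod (A x z)) * C ^ k"
    by (simp add: sum_distrib_right)
  also have "\<dots> \<le> C * C ^ k"
    using rowb C0 by (intro mult_right_mono) auto
  finally show ?case unfolding C_def by simp
qed

definition ecoef :: "nat \<Rightarrow> nat \<Rightarrow> qop \<Rightarrow> (nat \<Rightarrow> nat) \<Rightarrow> (nat \<Rightarrow> nat) \<Rightarrow> nat \<Rightarrow> complex" where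
  "ecoef d n H x y k = (- \<i>) ^ k * qpow d n H k x y / of_nat (fact k)"

lemma mpow: "(- (\<i> * c)) ^ k = (- \<i>) ^ k * (c::complex) ^ k"
  by (metis minus_mult_left power_mult_distrib)

lemma qevol_powser:
  "qevol d n H t x y = (\<Sum>k. ecoef d n H x y k * (of_real t) ^ k)"
proof -
  have "qpow d n (\<lambda>x y. - (\<i> * of_real t) * H x y) k x y = ecoef d n H x y k * (of_real t) ^ k * of_nat (fact k)" for k
    by (subst qpow_scale) (simp add: ecoef_def mpow)
  then show ?thesis
    unfolding qevol_def qexp_def by simp
qed

lemma ecoef_summable:
  assumes "x \<in> qbasis d n"
  shows "summable (\<lambda>k. ecoef d n H x y k * z ^ k)"
proof -
  define C where "C = (\<Sum>u\<in>qbasis d n. \<Sum>v\<in>qbasis d n. cmod (H u v))"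
  have bnd: "norm (ecoef d n H x y k * z ^ k) \<le> (C * cmod z) ^ k / fact k" for k
  proof -
    have "norm (ecoef d n H x y k * z ^ k) = cmod (qpow d n H k x y) * cmod z ^ k / fact k"
      by (simp add: ecoef_def norm_mult norm_divide norm_power)
    also have "\<dots> \<le> C ^ k * cmod z ^ k / fact k"
      using qpow_bound[OF assms, of H k y] unfolding C_def
      by (intro divide_right_mono mult_right_mono) auto
    finally show ?thesis by (simp add: power_mult_distrib)
  qed
  have S: "summable (\<lambda>k. (C * cmod z) ^ k / fact k)"
    using summable_exp[of "C * cmod z"] by (simp add: divide_inverse mult.commute)
  show ?thesis
    by (rule summable_comparison_test'[where N=0, OF S]) (rule bnd)
qed

lemma qevol_zero: "qevol d n H 0 x y = qid x y"
  unfolding qevol_powser of_real_0 powser_zero by (simp add: ecoef_def)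

lemma qevol_deriv:
  assumes "x \<in> qbasis d n" "y \<in> qbasis d n"
  shows "((\<lambda>t. qevol d n H t x y) has_vector_derivative (- \<i> * H x y)) (at 0)"
proof -
  have D: "((\<lambda>z. \<Sum>k. ecoef d n H x y k * z ^ k) has_field_derivative
            (\<Sum>k. diffs (ecoef d n H x y) k * 0 ^ k)) (at (of_real 0))"
    using termdiffs_strong_converges_everywhere[of "ecoef d n H x y" 0]
      ecoef_summable[OF assms(1)] by simp
  have v: "(\<Sum>k. diffs (ecoef d n H x y) k * 0 ^ k) = - \<i> * H x y"
    using assms(2) by (simp only: powser_zero) (simp add: diffs_def ecoef_def qmult_def qid_def if_distrib cong: if_cong)
  show ?thesis
    unfolding qevol_powser
    using has_vector_derivative_real_field[OF D, of UNIV] v by simp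
qed

abbreviation "Ot d n H Op t \<equiv> qmult d n (qmult d n (qevol d n H t) Op) (qadj (qevol d n H t))"

definition Od :: "nat \<Rightarrow> nat \<Rightarrow> qop \<Rightarrow> qop \<Rightarrow> qop" where
  "Od d n H Op = (\<lambda>x y. - \<i> * (qmult d n H Op x y - qmult d n Op H x y))"

lemma ifmult: "(if P then 1 else 0) * (a::complex) = (if P then a else 0)"
  "a * (if P then 1 else 0) = (if P then a else 0)"
  "cnj (if P then 1 else 0) = (if P then 1 else 0)"
  by auto

lemma Ot_zero:
  assumes "x \<in> qbasis d n" "y \<in> qbasis d n"
  shows "Ot d n H Op 0 x y = Op x y"
  using assms by (simp add: qmult_def qadj_def qevol_zero qid_def ifmult)

lemma Ot_deriv:
  assumes herm: "hermitian_op d n H" and xy: "x \<in> qbasis d n" "y \<in> qbasis d n"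
  shows "((\<lambda>t. Ot d n H Op t x y) has_vector_derivative Od d n H Op x y) (at 0)"
proof -
  let ?B = "qbasis d n"
  have "((\<lambda>t. \<Sum>w\<in>?B. (\<Sum>z\<in>?B. qevol d n H t x z * Op z w) * cnj (qevol d n H t y w))
     has_vector_derivative
     (\<Sum>w\<in>?B. (\<Sum>z\<in>?B. qevol d n H 0 x z * Op z w) * cnj (- \<i> * H y w)
         + (\<Sum>z\<in>?B. (- \<i> * H x z) * Op z w) * cnj (qevol d n H 0 y w))) (at 0)"
  proof (rule has_vector_derivative_sum)
    fix w assume w: "w \<in> ?B"
    have s1: "((\<lambda>t. \<Sum>z\<in>?B. qevol d n H t x z * Op z w) has_vector_derivative
       (\<Sum>z\<in>?B. (- \<i> * H x z) * Op z w)) (at 0)"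
      by (rule has_vector_derivative_sum, rule has_vector_derivative_mult_left, rule qevol_deriv[OF xy(1)])
    have s2: "((\<lambda>t. cnj (qevol d n H t y w)) has_vector_derivative cnj (- \<i> * H y w)) (at 0)"
      by (rule has_vector_derivative_cnj, rule qevol_deriv[OF xy(2) w])
    show "((\<lambda>t. (\<Sum>z\<in>?B. qevol d n H t x z * Op z w) * cnj (qevol d n H t y w)) has_vector_derivative
      (\<Sum>z\<in>?B. qevol d n H 0 x z * Op z w) * cnj (- \<i> * H y w)
         + (\<Sum>z\<in>?B. (- \<i> * H x z) * Op z w) * cnj (qevol d n H 0 y w)) (at 0)"
      by (rule has_vector_derivative_mult[OF s1 s2])
  qed
  moreover have "(\<Sum>w\<in>?B. (\<Sum>z\<in>?B. qevol d n H 0 x z * Op z w) * cnj (- \<i> * H y w)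
         + (\<Sum>z\<in>?B. (- \<i> * H x z) * Op z w) * cnj (qevol d n H 0 y w)) = Od d n H Op x y"
  proof -
    have h: "w \<in> ?B \<Longrightarrow> cnj (H y w) = H w y" for w
      using herm xy(2) unfolding hermitian_op_def by metis
    have "(\<Sum>w\<in>?B. (\<Sum>z\<in>?B. qevol d n H 0 x z * Op z w) * cnj (- \<i> * H y w)
         + (\<Sum>z\<in>?B. (- \<i> * H x z) * Op z w) * cnj (qevol d n H 0 y w))
       = (\<Sum>w\<in>?B. Op x w * (\<i> * H w y)) + (\<Sum>z\<in>?B. (- \<i> * H x z) * Op z y)"
      using xy h by (simp add: sum.distrib qevol_zero qid_def ifmult)
    also have "\<dots> = Od d n H Op x y"
      by (simp add: Od_def qmult_def sum_distrib_left algebra_simps sum_negf)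
    finally show ?thesis .
  qed
  ultimately show ?thesis unfolding qmult_def qadj_def by simp
qed

definition pc :: "nat \<Rightarrow> nat \<Rightarrow> qop \<Rightarrow> (nat \<Rightarrow> nat \<times> nat) \<Rightarrow> complex" where
  "pc d n A a = qtrace d n (qmult d n A (pauli d n a))"

lemma pc_deriv:
  assumes herm: "hermitian_op d n H"
  shows "((\<lambda>t. pc d n (Ot d n H Op t) a) has_vector_derivative pc d n (Od d n H Op) a) (at 0)"
  unfolding pc_def qtrace_def qmult_def[of d n _ "pauli d n a"]
proof (rule has_vector_derivative_sum)
  fix x assume x: "x \<in> qbasis d n"
  show "((\<lambda>t. \<Sum>z\<in>qbasis d n. Ot d n H Op t x z * pauli d n a z x) has_vector_derivative
     (\<Sum>z\<in>qbasis d n. Od d n H Op x z * pauli d n a z x)) (at 0)"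
  proof (rule has_vector_derivative_sum)
    fix z assume z: "z \<in> qbasis d n"
    show "((\<lambda>t. Ot d n H Op t x z * pauli d n a z x) has_vector_derivative
     (Od d n H Op x z * pauli d n a z x)) (at 0)"
      by (rule has_vector_derivative_mult_left, rule Ot_deriv[OF herm x z])
  qed
qed

lemma pc_zero: "pc d n (Ot d n H Op 0) a = pc d n Op a"
  unfolding pc_def qtrace_def qmult_def[of d n _ "pauli d n a"]
  by (intro sum.cong refl) (simp add: Ot_zero)

lemma cmod_sq_deriv:
  assumes "(c has_vector_derivative c') (at 0)"
  shows "((\<lambda>t. (cmod (c t))\<^sup>2) has_field_derivative 2 * Re (cnj (c 0) * c')) (at 0)"
proof -
  have "((\<lambda>t. c t * cnj (c t)) has_vector_derivative (c 0 * cnj c' + c' * cnj (c 0))) (at 0)"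
    by (intro has_vector_derivative_mult has_vector_derivative_cnj assms)
  then have D: "((\<lambda>t. Re (c t * cnj (c t))) has_field_derivative Re (c 0 * cnj c' + c' * cnj (c 0))) (at 0)"
    unfolding has_vector_derivative_complex_iff by blast
  have e1: "(\<lambda>t. Re (c t * cnj (c t))) = (\<lambda>t. (cmod (c t))\<^sup>2)"
    by (metis Re_complex_of_real complex_norm_square)
  have e2: "Re (c 0 * cnj c' + c' * cnj (c 0)) = 2 * Re (cnj (c 0) * c')"
    by (simp add: algebra_simps)
  show ?thesis using D unfolding e1 e2 .
qed

lemma rate_formula:
  assumes herm: "hermitian_op d n H"
  shows "influence_rate d n H Op =
    (\<Sum>a\<in>pauli_idx d n. real (pweight n a) * (2 * Re (cnj (pc d n Op a) * pc d n (Od d n H Op) a) / real d ^ (2 * n)))"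
proof -
  have cm: "((\<lambda>t. (cmod (pc d n (Ot d n H Op t) a))\<^sup>2) has_field_derivative 2 * Re (cnj (pc d n Op a) * pc d n (Od d n H Op) a)) (at 0)" for a
    using cmod_sq_deriv[OF pc_deriv[OF herm]] unfolding pc_zero .
  have "((\<lambda>t. influence d n (Ot d n H Op t)) has_field_derivative
    (\<Sum>a\<in>pauli_idx d n. real (pweight n a) * (2 * Re (cnj (pc d n Op a) * pc d n (Od d n H Op) a) / real d ^ (2 * n)))) (at 0)"
    unfolding influence_def pauli_weight_dist_def pc_def[symmetric]
    by (rule DERIV_sum, rule DERIV_cmult, rule DERIV_cdivide, rule cm)
  then show ?thesis unfolding influence_rate_def by (rule DERIV_imp_deriv)
qed

lemma char_sum:
  assumes "u < d" "u' < d"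
  shows "(\<Sum>t<d. cnj (cis (2 * pi * real t * real u / real d)) * cis (2 * pi * real t * real u' / real d))
         = (if u = u' then of_nat d else 0)"
proof (cases "u = u'")
  case True
  then show ?thesis by (simp add: cis_cnj cis_mult)
next
  case False
  define m :: real where "m = real u' - real u"
  define \<omega> where "\<omega> = cis (2 * pi * m / real d)"
  have d0: "d > 0" using assms by auto
  have m0: "m \<noteq> 0" using False by (simp add: m_def)
  have mb: "\<bar>m\<bar> < real d" using assms by (simp add: m_def abs_if)
  have "\<omega> \<noteq> 1"
  proof
    assume "\<omega> = 1"
    then have "cos (2 * pi * m / real d) = 1" unfolding \<omega>_def by (simp add: complex_eq_iff)
    then obtain k :: int where k: "2 * pi * m / real d = 2 * pi * of_int k"
      by (auto simp: cos_one_2pi_int)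
    then have mk: "m = real d * of_int k" using d0 by (simp add: field_simps)
    show False
    proof (cases "k = 0")
      case True then show False using mk m0 by simp
    next
      case False
      then have "\<bar>of_int k :: real\<bar> \<ge> 1" by linarith
      then have "\<bar>m\<bar> \<ge> real d" using mk d0 by (simp add: abs_mult)
      then show False using mb by simp
    qed
  qed
  have terms: "cnj (cis (2 * pi * real t * real u / real d)) * cis (2 * pi * real t * real u' / real d) = \<omega> ^ t" for t
  proof -
    have "\<omega> ^ t = cis (real t * (2 * pi * m / real d))" unfolding \<omega>_def by (rule Complex.DeMoivre)
    moreover have "- (2 * pi * real t * real u / real d) + 2 * pi * real t * real u' / real d
       = real t * (2 * pi * m / real d)" using d0 by (simp add: m_def field_simps)
    ultimately show ?thesis by (simp add: cis_cnj cis_mult)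
  qed
  have "\<omega> ^ d = cis (2 * pi * m)"
    using d0 by (simp add: \<omega>_def Complex.DeMoivre)
  also have "\<dots> = 1"
  proof -
    have "m \<in> \<int>" unfolding m_def by simp
    then show ?thesis by (rule cis_multiple_2pi)
  qed
  finally have wd: "\<omega> ^ d = 1" .
  have "(\<Sum>t<d. \<omega> ^ t) = (\<omega> ^ d - 1) / (\<omega> - 1)"
    using \<open>\<omega> \<noteq> 1\<close> by (rule geometric_sum)
  then show ?thesis using False wd by (simp add: terms)
qed

lemma mod_shift_unique:
  fixes u v d :: nat
  assumes "u < d" "v < d"
  shows "{s. s < d \<and> (u + s) mod d = v} = {(v + d - u) mod d}"
proof -
  have d0: "d > 0" using assms by auto
  have a: "(u + (v + d - u) mod d) mod d = v"
  proof -
    have "(u + (v + d - u) mod d) mod d = (u + (v + d - u)) mod d" by (simp add: mod_add_right_eq)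
    also have "u + (v + d - u) = v + d" using assms by simp
    finally show ?thesis using assms by simp
  qed
  have b: "s = (v + d - u) mod d" if "s < d" "(u + s) mod d = v" for s
  proof (cases "u + s < d")
    case True
    then have "v = u + s" using that by simp
    then have "v + d - u = s + d" by simp
    then show ?thesis using that by simp
  next
    case False
    then have "(u + s) mod d = u + s - d" using that assms by (simp add: le_mod_geq)
    then have "v + d - u = s" using that False by simp
    then show ?thesis using that by simp
  qed
  show ?thesis using a b d0 by auto
qed

lemma site_full:
  assumes "u < d" "v < d" "u' < d" "v' < d"
  shows "(\<Sum>b\<in>{..<d} \<times> {..<d}. cnj (pauli1 d b v u) * pauli1 d b v' u')
         = (if u = u' \<and> v = v' then of_nat d else 0)"
proof -
  have "(\<Sum>b\<in>{..<d} \<times> {..<d}. cnj (pauli1 d b v u) * pauli1 d b v' u')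
     = (\<Sum>s<d. \<Sum>t<d. (if v = (u + s) mod d \<and> v' = (u' + s) mod d then 1 else 0) *
          (cnj (cis (2 * pi * real t * real u / real d)) * cis (2 * pi * real t * real u' / real d)))"
    unfolding sum.cartesian_product by (intro sum.cong refl) (auto simp: pauli1_def)
  also have "\<dots> = (\<Sum>s<d. (if v = (u + s) mod d \<and> v' = (u' + s) mod d then 1 else 0) *
          (if u = u' then of_nat d else 0))"
    by (simp add: sum_distrib_left[symmetric] char_sum assms)
  also have "\<dots> = (if u = u' then of_nat d * (\<Sum>s<d. if (u + s) mod d = v \<and> v' = v then 1 else 0) else 0)"
    by (auto simp: sum_distrib_left intro!: sum.cong)
  also have "\<dots> = (if u = u' \<and> v = v' then of_nat d else 0)"
  proof (cases "v' = v")
    case True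
    have "(\<Sum>s<d. if (u + s) mod d = v then 1 else 0 :: complex) = of_nat (card {s. s < d \<and> (u + s) mod d = v})"
      by (simp add: sum.If_cases lessThan_def Collect_conj_eq Int_commute)
    also have "\<dots> = 1" using mod_shift_unique[OF assms(1,2)] by simp
    finally show ?thesis using True by auto
  qed auto
  finally show ?thesis .
qed

lemma site_zero:
  assumes "u < d" "v < d" "u' < d" "v' < d"
  shows "(\<Sum>b\<in>{(0,0)}. cnj (pauli1 d b v u) * pauli1 d b v' u')
         = (if v = u \<and> v' = u' then 1 else 0)"
  using assms by (simp add: pauli1_def)

lemma collapse4:
  fixes h :: "(nat \<Rightarrow> nat) \<Rightarrow> (nat \<Rightarrow> nat) \<Rightarrow> complex"
  assumes "finite Y" "x \<in> Y" "z \<in> Y"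
  shows "(\<Sum>x'\<in>Y. \<Sum>z'\<in>Y. h x' z' * (if x' = x \<and> z' = z then \<kappa> else 0)) = h x z * \<kappa>"
proof -
  have "(\<Sum>x'\<in>Y. \<Sum>z'\<in>Y. h x' z' * (if x' = x \<and> z' = z then \<kappa> else 0))
      = (\<Sum>x'\<in>Y. if x' = x then h x' z * \<kappa> else 0)"
    using assms by (intro sum.cong refl) (simp add: if_distrib[of "\<lambda>u. _ * u"] sum.delta' cong: if_cong)
  also have "\<dots> = h x z * \<kappa>" using assms by (simp add: sum.delta')
  finally show ?thesis .
qed

lemma parseval_gen:
  fixes W :: "nat \<Rightarrow> (nat \<times> nat) set" and Y :: "(nat \<Rightarrow> nat) set" and F G :: qop
  assumes finY: "finite Y" and finW: "\<And>i. finite (W i)"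
    and K: "\<And>x z x' z'. x \<in> Y \<Longrightarrow> z \<in> Y \<Longrightarrow> x' \<in> Y \<Longrightarrow> z' \<in> Y \<Longrightarrow>
       (\<Prod>i<n. \<Sum>b\<in>W i. cnj (pauli1 d b (z i) (x i)) * pauli1 d b (z' i) (x' i))
        = (if x' = x \<and> z' = z then \<kappa> else 0)"
  shows "(\<Sum>a\<in>PiE {..<n} W. cnj (\<Sum>x\<in>Y. \<Sum>z\<in>Y. F x z * pauli d n a z x) *
                             (\<Sum>x\<in>Y. \<Sum>z\<in>Y. G x z * pauli d n a z x))
         = \<kappa> * (\<Sum>x\<in>Y. \<Sum>z\<in>Y. cnj (F x z) * G x z)"
proof -
  let ?A = "PiE {..<n} W"
  have s1: "cnj (\<Sum>x\<in>Y. \<Sum>z\<in>Y. F x z * pauli d n a z x) * (\<Sum>x\<in>Y. \<Sum>z\<in>Y. G x z * pauli d n a z x)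
     = (\<Sum>x\<in>Y. \<Sum>z\<in>Y. \<Sum>x'\<in>Y. \<Sum>z'\<in>Y. (cnj (F x z) * G x' z') * (cnj (pauli d n a z x) * pauli d n a z' x'))" for a
  proof -
    have "cnj (\<Sum>x\<in>Y. \<Sum>z\<in>Y. F x z * pauli d n a z x) * (\<Sum>x\<in>Y. \<Sum>z\<in>Y. G x z * pauli d n a z x)
     = (\<Sum>x\<in>Y. \<Sum>x'\<in>Y. \<Sum>z\<in>Y. \<Sum>z'\<in>Y. (cnj (F x z) * G x' z') * (cnj (pauli d n a z x) * pauli d n a z' x'))"
      by (simp add: sum_distrib_left sum_distrib_right mult_ac)
    also have "\<dots> = (\<Sum>x\<in>Y. \<Sum>z\<in>Y. \<Sum>x'\<in>Y. \<Sum>z'\<in>Y. (cnj (F x z) * G x' z') * (cnj (pauli d n a z x) * pauli d n a z' x'))"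
      by (rule sum.cong[OF refl], rule sum.swap)
    finally show ?thesis .
  qed
  have s3: "(\<Sum>a\<in>?A. cnj (pauli d n a z x) * pauli d n a z' x')
     = (\<Prod>i<n. \<Sum>b\<in>W i. cnj (pauli1 d b (z i) (x i)) * pauli1 d b (z' i) (x' i))" for x z x' z'
    by (simp add: prod_sum_PiE finW pauli_def prod.distrib)
  have "(\<Sum>a\<in>?A. cnj (\<Sum>x\<in>Y. \<Sum>z\<in>Y. F x z * pauli d n a z x) * (\<Sum>x\<in>Y. \<Sum>z\<in>Y. G x z * pauli d n a z x))
     = (\<Sum>a\<in>?A. \<Sum>x\<in>Y. \<Sum>z\<in>Y. \<Sum>x'\<in>Y. \<Sum>z'\<in>Y. (cnj (F x z) * G x' z') * (cnj (pauli d n a z x) * pauli d n a z' x'))"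
    by (simp only: s1)
  also have "\<dots> = (\<Sum>x\<in>Y. \<Sum>z\<in>Y. \<Sum>x'\<in>Y. \<Sum>z'\<in>Y. \<Sum>a\<in>?A. (cnj (F x z) * G x' z') * (cnj (pauli d n a z x) * pauli d n a z' x'))"
    by (simp only: sum.swap[of _ ?A])
  also have "\<dots> = (\<Sum>x\<in>Y. \<Sum>z\<in>Y. \<Sum>x'\<in>Y. \<Sum>z'\<in>Y. (cnj (F x z) * G x' z') * (\<Sum>a\<in>?A. cnj (pauli d n a z x) * pauli d n a z' x'))"
    by (simp only: sum_distrib_left)
  also have "\<dots> = (\<Sum>x\<in>Y. \<Sum>z\<in>Y. \<Sum>x'\<in>Y. \<Sum>z'\<in>Y. (cnj (F x z) * G x' z') * (if x' = x \<and> z' = z then \<kappa> else 0))"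
    by (intro sum.cong refl) (simp add: s3 K)
  also have "\<dots> = (\<Sum>x\<in>Y. \<Sum>z\<in>Y. cnj (F x z) * G x z * \<kappa>)"
    by (intro sum.cong refl) (rule collapse4[OF finY], auto)
  also have "\<dots> = \<kappa> * (\<Sum>x\<in>Y. \<Sum>z\<in>Y. cnj (F x z) * G x z)"
    by (simp add: sum_distrib_left mult_ac)
  finally show ?thesis .
qed

lemma prod_if_const:
  assumes "finite I"
  shows "(\<Prod>i\<in>I. if P i then (c::complex) else 0) = (if \<forall>i\<in>I. P i then c ^ card I else 0)"
  using assms by (auto simp: prod_constant intro: prod_zero)

lemma qbasis_eq:
  assumes "x \<in> qbasis d n" "y \<in> qbasis d n"
  shows "x = y \<longleftrightarrow> (\<forall>i<n. x i = y i)"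
  using assms unfolding qbasis_def by (auto intro: PiE_ext)

lemma qbasis_lt: "x \<in> qbasis d n \<Longrightarrow> i < n \<Longrightarrow> x i < d"
  unfolding qbasis_def by (auto dest: PiE_mem)

lemma pc_expand: "pc d n A a = (\<Sum>x\<in>qbasis d n. \<Sum>z\<in>qbasis d n. A x z * pauli d n a z x)"
  by (simp add: pc_def qtrace_def qmult_def)

lemma parseval_full:
  "(\<Sum>a\<in>pauli_idx d n. cnj (pc d n F a) * pc d n G a)
     = of_nat d ^ n * (\<Sum>x\<in>qbasis d n. \<Sum>z\<in>qbasis d n. cnj (F x z) * G x z)"
  unfolding pc_expand pauli_idx_def
proof (rule parseval_gen)
  fix x z x' z' assume xs: "x \<in> qbasis d n" "z \<in> qbasis d n" "x' \<in> qbasis d n" "z' \<in> qbasis d n"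
  have "(\<Prod>i<n. \<Sum>b\<in>{..<d} \<times> {..<d}. cnj (pauli1 d b (z i) (x i)) * pauli1 d b (z' i) (x' i))
     = (\<Prod>i<n. if x i = x' i \<and> z i = z' i then of_nat d else 0)"
    using xs by (intro prod.cong refl site_full) (auto intro: qbasis_lt)
  also have "\<dots> = (if x' = x \<and> z' = z then of_nat d ^ n else 0)"
    using xs by (simp add: prod_if_const qbasis_eq) (auto simp: qbasis_eq)
  finally show "(\<Prod>i<n. \<Sum>b\<in>{..<d} \<times> {..<d}. cnj (pauli1 d b (z i) (x i)) * pauli1 d b (z' i) (x' i))
     = (if x' = x \<and> z' = z then of_nat d ^ n else 0)" .
qed auto

definition Xs :: "nat \<Rightarrow> nat \<Rightarrow> nat \<Rightarrow> (nat \<Rightarrow> nat) set" where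
  "Xs d n j = {x \<in> qbasis d n. x j = 0}"

definition Wj :: "nat \<Rightarrow> nat \<Rightarrow> nat \<Rightarrow> (nat \<times> nat) set" where
  "Wj d j = (\<lambda>i. if i = j then {(0,0)} else {..<d} \<times> {..<d})"

definition ptr :: "nat \<Rightarrow> nat \<Rightarrow> qop \<Rightarrow> qop" where
  "ptr d j A = (\<lambda>x z. \<Sum>c<d. A (x(j:=c)) (z(j:=c)))"

lemma finite_Xs[simp]: "finite (Xs d n j)"
  by (simp add: Xs_def)

lemma upd_in_qbasis:
  assumes "x \<in> qbasis d n" "j < n" "c < d"
  shows "x(j:=c) \<in> qbasis d n"
  using assms unfolding qbasis_def by (auto simp: PiE_iff extensional_def)

lemma split_sum:
  assumes j: "j < n"
  shows "(\<Sum>x\<in>qbasis d n. f x) = (\<Sum>x\<in>Xs d n j. \<Sum>c<d. f (x(j:=c)))"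
proof -
  let ?g = "\<lambda>(x, c). x(j:=c)"
  have inj: "inj_on ?g (Xs d n j \<times> {..<d})"
  proof (rule inj_onI)
    fix p q assume p: "p \<in> Xs d n j \<times> {..<d}" and q: "q \<in> Xs d n j \<times> {..<d}" and eq0: "?g p = ?g q"
    obtain x c where pxc: "p = (x, c)" by (cases p)
    obtain x' c' where qxc: "q = (x', c')" by (cases q)
    have eq: "x(j := c) = x'(j := c')" using eq0 pxc qxc by simp
    have x0: "x j = 0" "x' j = 0" using p q pxc qxc by (auto simp: Xs_def)
    have "c = c'" using fun_cong[OF eq, of j] by simp
    moreover have "x = x'"
    proof
      fix i show "x i = x' i" using fun_cong[OF eq, of i] x0 by (cases "i = j") auto
    qed
    ultimately show "p = q" using pxc qxc by simp
  qed
  have img: "?g ` (Xs d n j \<times> {..<d}) = qbasis d n"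
  proof
    show "?g ` (Xs d n j \<times> {..<d}) \<subseteq> qbasis d n"
      using j by (auto simp: Xs_def intro: upd_in_qbasis)
  next
    show "qbasis d n \<subseteq> ?g ` (Xs d n j \<times> {..<d})"
    proof
      fix y assume y: "y \<in> qbasis d n"
      have yj: "y j < d" using qbasis_lt[OF y j] .
      have "y(j:=0) \<in> Xs d n j" using upd_in_qbasis[OF y j, of 0] yj by (simp add: Xs_def)
      moreover have "y = ?g (y(j:=0), y j)" by simp
      ultimately show "y \<in> ?g ` (Xs d n j \<times> {..<d})" using yj by blast
    qed
  qed
  have "(\<Sum>x\<in>Xs d n j. \<Sum>c<d. f (x(j:=c))) = (\<Sum>p\<in>Xs d n j \<times> {..<d}. f (?g p))"
    by (simp add: sum.cartesian_product split_def)
  also have "\<dots> = (\<Sum>y\<in>?g ` (Xs d n j \<times> {..<d}). f y)"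
    by (rule sum.reindex[OF inj, symmetric, unfolded comp_def])
  also have "\<dots> = (\<Sum>y\<in>qbasis d n. f y)" by (simp only: img)
  finally show ?thesis by simp
qed

lemma pauli_upd:
  assumes j: "j < n" and a: "a j = (0,0)" and x: "x \<in> Xs d n j" and z: "z \<in> Xs d n j"
    and c: "c < d" "c' < d"
  shows "pauli d n a (z(j:=c')) (x(j:=c)) = (if c' = c then pauli d n a z x else 0)"
proof -
  have jm: "j \<in> {..<n}" using j by simp
  have x0: "x j = 0" and z0: "z j = 0" using x z by (auto simp: Xs_def)
  have "pauli d n a (z(j:=c')) (x(j:=c)) = pauli1 d (a j) c' c * (\<Prod>i\<in>{..<n} - {j}. pauli1 d (a i) (z i) (x i))"
    unfolding pauli_def by (simp add: prod.remove[OF finite_lessThan jm])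
  moreover have "pauli d n a z x = pauli1 d (a j) 0 0 * (\<Prod>i\<in>{..<n} - {j}. pauli1 d (a i) (z i) (x i))"
    unfolding pauli_def using x0 z0 by (simp add: prod.remove[OF finite_lessThan jm])
  ultimately show ?thesis using a c by (simp add: pauli1_def)
qed

lemma pc_restr:
  assumes j: "j < n" and a: "a j = (0,0)"
  shows "pc d n A a = (\<Sum>x\<in>Xs d n j. \<Sum>z\<in>Xs d n j. ptr d j A x z * pauli d n a z x)"
proof -
  have "pc d n A a = (\<Sum>x\<in>Xs d n j. \<Sum>c<d. \<Sum>z\<in>Xs d n j. \<Sum>c'<d.
           A (x(j:=c)) (z(j:=c')) * pauli d n a (z(j:=c')) (x(j:=c)))"
    unfolding pc_expand split_sum[OF j] ..
  also have "\<dots> = (\<Sum>x\<in>Xs d n j. \<Sum>c<d. \<Sum>z\<in>Xs d n j. A (x(j:=c)) (z(j:=c)) * pauli d n a z x)"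
    by (intro sum.cong refl) (simp add: pauli_upd[where a=a, OF j a] if_distrib[of "\<lambda>u. _ * u"] sum.delta' cong: if_cong)
  also have "\<dots> = (\<Sum>x\<in>Xs d n j. \<Sum>z\<in>Xs d n j. \<Sum>c<d. A (x(j:=c)) (z(j:=c)) * pauli d n a z x)"
    by (rule sum.cong[OF refl], rule sum.swap)
  also have "\<dots> = (\<Sum>x\<in>Xs d n j. \<Sum>z\<in>Xs d n j. ptr d j A x z * pauli d n a z x)"
    by (simp add: ptr_def sum_distrib_right)
  finally show ?thesis .
qed

lemma Xs_eq:
  assumes "x \<in> Xs d n j" "y \<in> Xs d n j"
  shows "x = y \<longleftrightarrow> (\<forall>i\<in>{..<n} - {j}. x i = y i)"
  using assms apply (auto simp: Xs_def qbasis_eq)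
  subgoal for i by (cases "i = j") auto
  done

lemma PiE_Wj:
  assumes j: "j < n" and d: "0 < d"
  shows "PiE {..<n} (Wj d j) = {a \<in> pauli_idx d n. a j = (0,0)}"
proof (rule set_eqI)
  fix a
  have "(\<forall>i\<in>{..<n}. a i \<in> Wj d j i) \<longleftrightarrow> (\<forall>i\<in>{..<n}. a i \<in> {..<d} \<times> {..<d}) \<and> a j = (0,0)"
  proof
    assume h: "\<forall>i\<in>{..<n}. a i \<in> Wj d j i"
    have "a j = (0,0)" using bspec[OF h, of j] j by (simp add: Wj_def)
    moreover have "a i \<in> {..<d} \<times> {..<d}" if "i \<in> {..<n}" for i
    proof (cases "i = j")
      case True then show ?thesis using \<open>a j = (0,0)\<close> d by simp
    next
      case False then show ?thesis using bspec[OF h that] by (simp add: Wj_def)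
    qed
    ultimately show "(\<forall>i\<in>{..<n}. a i \<in> {..<d} \<times> {..<d}) \<and> a j = (0,0)" by blast
  next
    assume h: "(\<forall>i\<in>{..<n}. a i \<in> {..<d} \<times> {..<d}) \<and> a j = (0,0)"
    show "\<forall>i\<in>{..<n}. a i \<in> Wj d j i"
      using h by (simp add: Wj_def)
  qed
  then show "a \<in> PiE {..<n} (Wj d j) \<longleftrightarrow> a \<in> {a \<in> pauli_idx d n. a j = (0,0)}"
    unfolding pauli_idx_def PiE_iff by blast
qed

lemma parseval_restr:
  assumes j: "j < n"
  shows "(\<Sum>a\<in>PiE {..<n} (Wj d j). cnj (pc d n F a) * pc d n G a)
     = of_nat d ^ (n - 1) * (\<Sum>x\<in>Xs d n j. \<Sum>z\<in>Xs d n j. cnj (ptr d j F x z) * ptr d j G x z)"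
proof -
  have jm: "j \<in> {..<n}" using j by simp
  have "(\<Sum>a\<in>PiE {..<n} (Wj d j). cnj (pc d n F a) * pc d n G a)
     = (\<Sum>a\<in>PiE {..<n} (Wj d j). cnj (\<Sum>x\<in>Xs d n j. \<Sum>z\<in>Xs d n j. ptr d j F x z * pauli d n a z x) *
                             (\<Sum>x\<in>Xs d n j. \<Sum>z\<in>Xs d n j. ptr d j G x z * pauli d n a z x))"
  proof (rule sum.cong[OF refl])
    fix a assume "a \<in> PiE {..<n} (Wj d j)"
    then have "a j = (0,0)" using PiE_mem[of a "{..<n}" "Wj d j" j] j by (simp add: Wj_def)
    then show "cnj (pc d n F a) * pc d n G a = cnj (\<Sum>x\<in>Xs d n j. \<Sum>z\<in>Xs d n j. ptr d j F x z * pauli d n a z x) *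
                             (\<Sum>x\<in>Xs d n j. \<Sum>z\<in>Xs d n j. ptr d j G x z * pauli d n a z x)"
      using pc_restr[OF j] by simp
  qed
  also have "\<dots> = of_nat d ^ (n - 1) * (\<Sum>x\<in>Xs d n j. \<Sum>z\<in>Xs d n j. cnj (ptr d j F x z) * ptr d j G x z)"
  proof (rule parseval_gen)
    fix x z x' z' assume xs: "x \<in> Xs d n j" "z \<in> Xs d n j" "x' \<in> Xs d n j" "z' \<in> Xs d n j"
    then have xb: "x \<in> qbasis d n" "z \<in> qbasis d n" "x' \<in> qbasis d n" "z' \<in> qbasis d n"
      and x0: "x j = 0" "z j = 0" "x' j = 0" "z' j = 0" by (auto simp: Xs_def)
    have "(\<Prod>i<n. \<Sum>b\<in>Wj d j i. cnj (pauli1 d b (z i) (x i)) * pauli1 d b (z' i) (x' i))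
       = (\<Prod>i<n. if i = j then 1 else if x i = x' i \<and> z i = z' i then of_nat d else 0)"
    proof (rule prod.cong[OF refl])
      fix i assume i: "i \<in> {..<n}"
      show "(\<Sum>b\<in>Wj d j i. cnj (pauli1 d b (z i) (x i)) * pauli1 d b (z' i) (x' i))
         = (if i = j then 1 else if x i = x' i \<and> z i = z' i then of_nat d else 0)"
      proof (cases "i = j")
        case True
        then show ?thesis using x0 by (simp add: Wj_def pauli1_def)
      next
        case False
        then show ?thesis using i xb by (simp add: Wj_def site_full qbasis_lt)
      qed
    qed
    also have "\<dots> = (\<Prod>i\<in>{..<n} - {j}. if x i = x' i \<and> z i = z' i then of_nat d else 0)"
      by (simp add: prod.remove[OF finite_lessThan jm])
    also have "\<dots> = (if x' = x \<and> z' = z then of_nat d ^ (n - 1) else 0)"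
      using xs j by (simp add: prod_if_const Xs_eq)
    finally show "(\<Prod>i<n. \<Sum>b\<in>Wj d j i. cnj (pauli1 d b (z i) (x i)) * pauli1 d b (z' i) (x' i))
       = (if x' = x \<and> z' = z then of_nat d ^ (n - 1) else 0)" .
  next
    show "finite (Xs d n j)" by simp
  next
    fix i show "finite (Wj d j i)" by (simp add: Wj_def)
  qed
  finally show ?thesis .
qed

lemma H_upd:
  assumes act: "acts_on d n S H" and j: "j < n" "j \<notin> S"
    and x: "x \<in> Xs d n j" and w: "w \<in> Xs d n j" and c: "c < d" "c' < d"
  shows "H (x(j:=c)) (w(j:=c')) = (if c = c' then H x w else 0)"
proof -
  obtain h where h: "\<forall>x\<in>qbasis d n. \<forall>y\<in>qbasis d n. H x y = h (restrict x S) (restrict y S) *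
               (if (\<forall>i\<in>{..<n} - S. x i = y i) then 1 else 0)"
    using act unfolding acts_on_def by blast
  have xb: "x \<in> qbasis d n" and wb: "w \<in> qbasis d n" and x0: "x j = 0" and w0: "w j = 0"
    using x w by (auto simp: Xs_def)
  have xcb: "x(j:=c) \<in> qbasis d n" and wcb: "w(j:=c') \<in> qbasis d n"
    using upd_in_qbasis xb wb j c by auto
  have r1: "restrict (x(j:=c)) S = restrict x S" and r2: "restrict (w(j:=c')) S = restrict w S"
    using j by (auto simp: restrict_def fun_eq_iff)
  have cond: "(\<forall>i\<in>{..<n} - S. (x(j:=c)) i = (w(j:=c')) i) \<longleftrightarrow> c = c' \<and> (\<forall>i\<in>{..<n} - S. x i = w i)"
  proof
    assume a: "\<forall>i\<in>{..<n} - S. (x(j:=c)) i = (w(j:=c')) i"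
    have "c = c'" using bspec[OF a, of j] j by simp
    moreover have "x i = w i" if "i \<in> {..<n} - S" for i
      using bspec[OF a that] x0 w0 by (cases "i = j") auto
    ultimately show "c = c' \<and> (\<forall>i\<in>{..<n} - S. x i = w i)" by blast
  next
    assume "c = c' \<and> (\<forall>i\<in>{..<n} - S. x i = w i)"
    then show "\<forall>i\<in>{..<n} - S. (x(j:=c)) i = (w(j:=c')) i" by auto
  qed
  have "H (x(j:=c)) (w(j:=c')) = h (restrict x S) (restrict w S) *
               (if c = c' \<and> (\<forall>i\<in>{..<n} - S. x i = w i) then 1 else 0)"
    using h xcb wcb r1 r2 cond by simp
  moreover have "H x w = h (restrict x S) (restrict w S) *
               (if (\<forall>i\<in>{..<n} - S. x i = w i) then 1 else 0)"
    using h xb wb by simp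
  ultimately show ?thesis by simp
qed

lemma ptr_HO:
  assumes act: "acts_on d n S H" and j: "j < n" "j \<notin> S"
    and x: "x \<in> Xs d n j" and y: "y \<in> Xs d n j"
  shows "ptr d j (qmult d n H A) x y = (\<Sum>w\<in>Xs d n j. H x w * ptr d j A w y)"
proof -
  have "ptr d j (qmult d n H A) x y = (\<Sum>c<d. \<Sum>w\<in>Xs d n j. \<Sum>c'<d. H (x(j:=c)) (w(j:=c')) * A (w(j:=c')) (y(j:=c)))"
    unfolding ptr_def qmult_def split_sum[OF j(1)] ..
  also have "\<dots> = (\<Sum>c<d. \<Sum>w\<in>Xs d n j. H x w * A (w(j:=c)) (y(j:=c)))"
    by (intro sum.cong refl) (simp add: H_upd[OF act j x] if_distrib[of "\<lambda>u. u * _"] sum.delta cong: if_cong)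
  also have "\<dots> = (\<Sum>w\<in>Xs d n j. \<Sum>c<d. H x w * A (w(j:=c)) (y(j:=c)))"
    by (rule sum.swap)
  also have "\<dots> = (\<Sum>w\<in>Xs d n j. H x w * ptr d j A w y)"
    by (simp add: ptr_def sum_distrib_left)
  finally show ?thesis .
qed

lemma ptr_OH:
  assumes act: "acts_on d n S H" and j: "j < n" "j \<notin> S"
    and x: "x \<in> Xs d n j" and y: "y \<in> Xs d n j"
  shows "ptr d j (qmult d n A H) x y = (\<Sum>w\<in>Xs d n j. ptr d j A x w * H w y)"
proof -
  have "ptr d j (qmult d n A H) x y = (\<Sum>c<d. \<Sum>w\<in>Xs d n j. \<Sum>c'<d. A (x(j:=c)) (w(j:=c')) * H (w(j:=c')) (y(j:=c)))"
    unfolding ptr_def qmult_def split_sum[OF j(1)] ..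
  also have "\<dots> = (\<Sum>c<d. \<Sum>w\<in>Xs d n j. A (x(j:=c)) (w(j:=c)) * H w y)"
    by (intro sum.cong refl) (simp add: H_upd[OF act j _ y] if_distrib[of "\<lambda>u. _ * u"] sum.delta' cong: if_cong)
  also have "\<dots> = (\<Sum>w\<in>Xs d n j. \<Sum>c<d. A (x(j:=c)) (w(j:=c)) * H w y)"
    by (rule sum.swap)
  also have "\<dots> = (\<Sum>w\<in>Xs d n j. ptr d j A x w * H w y)"
    by (simp add: ptr_def sum_distrib_right)
  finally show ?thesis .
qed

lemma cnj_fix_Im: "cnj z = z \<Longrightarrow> Im z = 0"
  by (simp add: complex_eq_iff)

lemma quad_real:
  assumes herm: "\<And>a b. a \<in> Y \<Longrightarrow> b \<in> Y \<Longrightarrow> M a b = cnj (M b a)"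
  shows "Im (\<Sum>a\<in>Y. \<Sum>b\<in>Y. cnj (v a) * M a b * v b) = 0"
proof -
  let ?Q = "\<Sum>a\<in>Y. \<Sum>b\<in>Y. cnj (v a) * M a b * v b"
  have hs: "a \<in> Y \<Longrightarrow> b \<in> Y \<Longrightarrow> cnj (M a b) = M b a" for a b
    using herm[of b a] by simp
  have "cnj ?Q = (\<Sum>a\<in>Y. \<Sum>b\<in>Y. v a * cnj (M a b) * cnj (v b))"
    by simp
  also have "\<dots> = (\<Sum>a\<in>Y. \<Sum>b\<in>Y. v a * M b a * cnj (v b))"
    by (intro sum.cong refl) (simp add: hs)
  also have "\<dots> = (\<Sum>b\<in>Y. \<Sum>a\<in>Y. v a * M b a * cnj (v b))"
    by (rule sum.swap)
  also have "\<dots> = ?Q"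
    by (simp add: mult_ac)
  finally have "cnj ?Q = ?Q" .
  then show ?thesis by (rule cnj_fix_Im)
qed

lemma real_left:
  assumes herm: "\<And>a b. a \<in> Y \<Longrightarrow> b \<in> Y \<Longrightarrow> M a b = cnj (M b a)"
  shows "Im (\<Sum>x\<in>Y. \<Sum>z\<in>Y. cnj (F x z) * (\<Sum>w\<in>Y. M x w * F w z)) = 0"
proof -
  have "(\<Sum>x\<in>Y. \<Sum>z\<in>Y. cnj (F x z) * (\<Sum>w\<in>Y. M x w * F w z))
      = (\<Sum>z\<in>Y. \<Sum>x\<in>Y. \<Sum>w\<in>Y. cnj (F x z) * M x w * F w z)"
    by (subst sum.swap) (simp add: sum_distrib_left mult_ac)
  also have "Im \<dots> = (\<Sum>z\<in>Y. Im (\<Sum>x\<in>Y. \<Sum>w\<in>Y. cnj (F x z) * M x w * F w z))"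
    by (rule Im_sum)
  also have "\<dots> = 0"
    using quad_real[of Y M, OF herm] by simp
  finally show ?thesis .
qed

lemma real_right:
  assumes herm: "\<And>a b. a \<in> Y \<Longrightarrow> b \<in> Y \<Longrightarrow> M a b = cnj (M b a)"
  shows "Im (\<Sum>x\<in>Y. \<Sum>z\<in>Y. cnj (F x z) * (\<Sum>w\<in>Y. F x w * M w z)) = 0"
proof -
  have "(\<Sum>x\<in>Y. \<Sum>z\<in>Y. cnj (F x z) * (\<Sum>w\<in>Y. F x w * M w z))
      = (\<Sum>x\<in>Y. \<Sum>z\<in>Y. \<Sum>w\<in>Y. cnj (F x z) * F x w * M w z)"
    by (simp add: sum_distrib_left mult_ac)
  also have "\<dots> = (\<Sum>x\<in>Y. \<Sum>w\<in>Y. \<Sum>z\<in>Y. cnj (cnj (F x w)) * M w z * cnj (F x z))"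
    by (rule sum.cong[OF refl], subst sum.swap) (simp add: mult_ac)
  also have "Im \<dots> = (\<Sum>x\<in>Y. Im (\<Sum>w\<in>Y. \<Sum>z\<in>Y. cnj (cnj (F x w)) * M w z * cnj (F x z)))"
    by (rule Im_sum)
  also have "\<dots> = 0"
  proof (rule sum.neutral, rule ballI)
    fix x show "Im (\<Sum>w\<in>Y. \<Sum>z\<in>Y. cnj (cnj (F x w)) * M w z * cnj (F x z)) = 0"
      by (rule quad_real[of Y M "\<lambda>w. cnj (F x w)", OF herm])
  qed
  finally show ?thesis .
qed

lemma qbasis_ne: "0 < d \<Longrightarrow> qbasis d n \<noteq> {}"
proof -
  assume d: "0 < d"
  have "(\<lambda>i. if i < n then 0 else undefined) \<in> qbasis d n"
    using d by (auto simp: qbasis_def PiE_iff extensional_def)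
  then show ?thesis by blast
qed

lemma opnorm_facts:
  assumes d: "0 < d"
  shows "0 \<le> op_norm d n H"
    and "(\<Sum>x\<in>qbasis d n. (cmod (\<Sum>y\<in>qbasis d n. H x y * v y))\<^sup>2)
           \<le> (op_norm d n H)\<^sup>2 * (\<Sum>y\<in>qbasis d n. (cmod (v y))\<^sup>2)"
proof -
  let ?B = "qbasis d n"
  let ?f = "\<lambda>v. sqrt (\<Sum>x\<in>?B. (cmod (\<Sum>y\<in>?B. H x y * v y))\<^sup>2)"
  define SS where "SS = {?f v | v. (\<Sum>y\<in>?B. (cmod (v y))\<^sup>2) = 1}"
  have opdef: "op_norm d n H = Sup SS" unfolding op_norm_def SS_def ..
  define Bd where "Bd = sqrt (\<Sum>x\<in>?B. (\<Sum>y\<in>?B. cmod (H x y))\<^sup>2)"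
  have bnd: "?f v \<le> Bd" if v: "(\<Sum>y\<in>?B. (cmod (v y))\<^sup>2) = 1" for v
  proof -
    have v1: "cmod (v y) \<le> 1" if y: "y \<in> ?B" for y
    proof -
      have "(cmod (v y))\<^sup>2 \<le> (\<Sum>y\<in>?B. (cmod (v y))\<^sup>2)"
        using y by (intro member_le_sum) auto
      then have "(cmod (v y))\<^sup>2 \<le> 1" using v by simp
      then show ?thesis by (simp add: power_le_one_iff abs_le_square_iff)
    qed
    have "cmod (\<Sum>y\<in>?B. H x y * v y) \<le> (\<Sum>y\<in>?B. cmod (H x y))" for x
    proof -
      have "cmod (\<Sum>y\<in>?B. H x y * v y) \<le> (\<Sum>y\<in>?B. cmod (H x y) * cmod (v y))"
        by (rule order_trans[OF norm_sum]) (simp add: norm_mult)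
      also have "\<dots> \<le> (\<Sum>y\<in>?B. cmod (H x y) * 1)"
        using v1 by (intro sum_mono mult_left_mono) auto
      finally show ?thesis by simp
    qed
    then have "(\<Sum>x\<in>?B. (cmod (\<Sum>y\<in>?B. H x y * v y))\<^sup>2) \<le> (\<Sum>x\<in>?B. (\<Sum>y\<in>?B. cmod (H x y))\<^sup>2)"
      by (intro sum_mono power_mono) auto
    then show ?thesis unfolding Bd_def by (rule real_sqrt_le_mono)
  qed
  have bdd: "bdd_above SS" unfolding SS_def using bnd by (auto intro!: bdd_aboveI[of _ Bd])
  have upper: "?f v \<le> op_norm d n H" if v: "(\<Sum>y\<in>?B. (cmod (v y))\<^sup>2) = 1" for v
    unfolding opdef by (rule cSup_upper[OF _ bdd]) (use v SS_def in blast)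
  obtain y0 where y0: "y0 \<in> ?B" using qbasis_ne[OF d] by blast
  have e1: "(\<Sum>y\<in>?B. (cmod (if y = y0 then 1 else 0))\<^sup>2) = 1"
    using y0 by (simp add: if_distrib[of "\<lambda>u. (cmod u)\<^sup>2"] cong: if_cong)
  have "0 \<le> ?f (\<lambda>y. if y = y0 then 1 else 0)" by (intro real_sqrt_ge_zero sum_nonneg) auto
  then show op0: "0 \<le> op_norm d n H"
    using upper[OF e1] by linarith
  let ?N = "\<Sum>y\<in>?B. (cmod (v y))\<^sup>2"
  show "(\<Sum>x\<in>?B. (cmod (\<Sum>y\<in>?B. H x y * v y))\<^sup>2) \<le> (op_norm d n H)\<^sup>2 * ?N"
  proof (cases "?N = 0")
    case True
    then have "\<forall>y\<in>?B. (cmod (v y))\<^sup>2 = 0" by (subst sum_nonneg_eq_0_iff[symmetric]) auto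
    then have "\<forall>y\<in>?B. v y = 0" by simp
    then show ?thesis by simp
  next
    case False
    have "?N \<ge> 0" by (intro sum_nonneg) auto
    then have Npos: "?N > 0" using False by linarith
    define s where "s = sqrt ?N"
    have s0: "s > 0" unfolding s_def using Npos by simp
    have s2: "s\<^sup>2 = ?N" unfolding s_def using Npos by simp
    define u where "u = (\<lambda>y. v y / complex_of_real s)"
    have "(\<Sum>y\<in>?B. (cmod (u y))\<^sup>2) = (\<Sum>y\<in>?B. (cmod (v y))\<^sup>2 / s\<^sup>2)"
      unfolding u_def using s0 by (simp add: norm_divide power_divide)
    also have "\<dots> = 1" using s2 Npos by (simp add: sum_divide_distrib[symmetric])
    finally have u1: "(\<Sum>y\<in>?B. (cmod (u y))\<^sup>2) = 1" .
    have "(\<Sum>x\<in>?B. (cmod (\<Sum>y\<in>?B. H x y * u y))\<^sup>2)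
        = (\<Sum>x\<in>?B. (cmod (\<Sum>y\<in>?B. H x y * v y))\<^sup>2) / s\<^sup>2"
    proof -
      have a: "(\<Sum>y\<in>?B. H x y * u y) = (\<Sum>y\<in>?B. H x y * v y) / complex_of_real s" for x
        unfolding u_def by (simp add: sum_divide_distrib)
      have b: "(cmod (z / complex_of_real s))\<^sup>2 = (cmod z)\<^sup>2 / s\<^sup>2" for z
        using s0 by (simp add: norm_divide power_divide)
      show ?thesis unfolding a b by (simp add: sum_divide_distrib)
    qed
    moreover have "(\<Sum>x\<in>?B. (cmod (\<Sum>y\<in>?B. H x y * u y))\<^sup>2) \<le> (op_norm d n H)\<^sup>2"
      using upper[OF u1] by (rule sqrt_le_D)
    ultimately have "(\<Sum>x\<in>?B. (cmod (\<Sum>y\<in>?B. H x y * v y))\<^sup>2) / ?N \<le> (op_norm d n H)\<^sup>2"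
      using s2 by simp
    then show ?thesis using Npos by (simp add: divide_le_eq mult.commute)
  qed
qed

lemma cnj_mult_self: "cnj z * z = complex_of_real ((cmod z)\<^sup>2)"
  by (metis complex_norm_square mult.commute)

lemma hs_sum:
  assumes "hs_norm d n Op = 1" "0 < d"
  shows "(\<Sum>x\<in>qbasis d n. \<Sum>z\<in>qbasis d n. (cmod (Op x z))\<^sup>2) = real d ^ n"
proof -
  let ?B = "qbasis d n"
  have "Re (qtrace d n (qmult d n (qadj Op) Op)) = (\<Sum>x\<in>?B. \<Sum>z\<in>?B. (cmod (Op z x))\<^sup>2)"
    by (simp add: qtrace_def qmult_def qadj_def cnj_mult_self Re_sum)
  also have "\<dots> = (\<Sum>x\<in>?B. \<Sum>z\<in>?B. (cmod (Op x z))\<^sup>2)"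
    by (rule sum.swap)
  finally have e: "Re (qtrace d n (qmult d n (qadj Op) Op)) = (\<Sum>x\<in>?B. \<Sum>z\<in>?B. (cmod (Op x z))\<^sup>2)" .
  have "sqrt ((\<Sum>x\<in>?B. \<Sum>z\<in>?B. (cmod (Op x z))\<^sup>2) / real d ^ n) = 1"
    using assms(1) unfolding hs_norm_def e .
  then have "(\<Sum>x\<in>?B. \<Sum>z\<in>?B. (cmod (Op x z))\<^sup>2) / real d ^ n = 1" by (simp only: real_sqrt_eq_1_iff)
  moreover have "real d ^ n \<noteq> 0" using assms(2) by simp
  ultimately show ?thesis by (simp only: divide_eq_1_iff)
qed

lemma HO_bound:
  assumes "0 < d"
  shows "(\<Sum>x\<in>qbasis d n. \<Sum>z\<in>qbasis d n. (cmod (qmult d n H A x z))\<^sup>2)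
     \<le> (op_norm d n H)\<^sup>2 * (\<Sum>x\<in>qbasis d n. \<Sum>z\<in>qbasis d n. (cmod (A x z))\<^sup>2)"
proof -
  let ?B = "qbasis d n"
  have "(\<Sum>x\<in>?B. \<Sum>z\<in>?B. (cmod (qmult d n H A x z))\<^sup>2) = (\<Sum>z\<in>?B. \<Sum>x\<in>?B. (cmod (\<Sum>w\<in>?B. H x w * A w z))\<^sup>2)"
    unfolding qmult_def by (rule sum.swap)
  also have "\<dots> \<le> (\<Sum>z\<in>?B. (op_norm d n H)\<^sup>2 * (\<Sum>w\<in>?B. (cmod (A w z))\<^sup>2))"
    by (intro sum_mono opnorm_facts(2)[OF assms])
  also have "\<dots> = (op_norm d n H)\<^sup>2 * (\<Sum>x\<in>?B. \<Sum>z\<in>?B. (cmod (A x z))\<^sup>2)"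
    unfolding sum_distrib_left by (rule sum.swap)
  finally show ?thesis .
qed

lemma OH_bound:
  assumes "0 < d" and herm: "hermitian_op d n H"
  shows "(\<Sum>x\<in>qbasis d n. \<Sum>z\<in>qbasis d n. (cmod (qmult d n A H x z))\<^sup>2)
     \<le> (op_norm d n H)\<^sup>2 * (\<Sum>x\<in>qbasis d n. \<Sum>z\<in>qbasis d n. (cmod (A x z))\<^sup>2)"
proof -
  let ?B = "qbasis d n"
  have eq: "cmod (qmult d n A H x z) = cmod (\<Sum>w\<in>?B. H z w * cnj (A x w))" if z: "z \<in> ?B" for x z
  proof -
    have "qmult d n A H x z = cnj (\<Sum>w\<in>?B. H z w * cnj (A x w))"
      unfolding qmult_def cnj_sum
    proof (rule sum.cong[OF refl])
      fix w assume w: "w \<in> ?B"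
      have "H w z = cnj (H z w)" using herm w z unfolding hermitian_op_def by blast
      then show "A x w * H w z = cnj (H z w * cnj (A x w))" by simp
    qed
    then show ?thesis by (metis complex_mod_cnj)
  qed
  have "(\<Sum>x\<in>?B. \<Sum>z\<in>?B. (cmod (qmult d n A H x z))\<^sup>2) = (\<Sum>x\<in>?B. \<Sum>z\<in>?B. (cmod (\<Sum>w\<in>?B. H z w * cnj (A x w)))\<^sup>2)"
    using eq by (intro sum.cong refl) simp
  also have "\<dots> \<le> (\<Sum>x\<in>?B. (op_norm d n H)\<^sup>2 * (\<Sum>w\<in>?B. (cmod (cnj (A x w)))\<^sup>2))"
    by (intro sum_mono opnorm_facts(2)[OF assms(1)])
  also have "\<dots> = (op_norm d n H)\<^sup>2 * (\<Sum>x\<in>?B. \<Sum>z\<in>?B. (cmod (A x z))\<^sup>2)"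
    by (simp add: sum_distrib_left)
  finally show ?thesis .
qed

lemma parseval_norm:
  "(\<Sum>a\<in>pauli_idx d n. (cmod (pc d n A a))\<^sup>2)
     = real d ^ n * (\<Sum>x\<in>qbasis d n. \<Sum>z\<in>qbasis d n. (cmod (A x z))\<^sup>2)"
proof -
  have "complex_of_real (\<Sum>a\<in>pauli_idx d n. (cmod (pc d n A a))\<^sup>2)
     = complex_of_real (real d ^ n * (\<Sum>x\<in>qbasis d n. \<Sum>z\<in>qbasis d n. (cmod (A x z))\<^sup>2))"
    using parseval_full[of d n A A] by (simp add: cnj_mult_self)
  then show ?thesis by (simp only: of_real_eq_iff)
qed

lemma cs_bound:
  "(\<Sum>a\<in>A. cmod (f a) * cmod (g a)) \<le> sqrt (\<Sum>a\<in>A. (cmod (f a))\<^sup>2) * sqrt (\<Sum>a\<in>A. (cmod (g a))\<^sup>2)"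
  using L2_set_mult_ineq[of "\<lambda>a. cmod (f a)" "\<lambda>a. cmod (g a)" A] by (simp add: L2_set_def)

lemma pc_Od: "pc d n (Od d n H Op) a = - \<i> * (pc d n (qmult d n H Op) a - pc d n (qmult d n Op H) a)"
  unfolding pc_expand Od_def
  by (simp only: right_diff_distrib left_diff_distrib mult.assoc sum_subtractf sum_distrib_left[symmetric])

lemma ptr_Od: "ptr d j (Od d n H Op) x z = - \<i> * (ptr d j (qmult d n H Op) x z - ptr d j (qmult d n Op H) x z)"
  unfolding ptr_def Od_def
  by (simp only: right_diff_distrib sum_subtractf sum_distrib_left[symmetric])

lemma pweight_sum: "real (pweight n a) = (\<Sum>j<n. if a j \<noteq> (0,0) then 1 else 0)"
proof -
  have "real (card {i\<in>{..<n}. a i \<noteq> (0,0)}) = (\<Sum>i\<in>{i\<in>{..<n}. a i \<noteq> (0,0)}. 1)" by simp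
  also have "\<dots> = (\<Sum>j<n. if a j \<noteq> (0,0) then 1 else 0)" by (rule sum.inter_filter) simp
  finally show ?thesis unfolding pweight_def .
qed

lemma sum_g: "(\<Sum>a\<in>A. 2 * Re (cnj (f a) * h a)) = 2 * Re (\<Sum>a\<in>A. cnj (f a) * h a)"
  by (simp add: Re_sum sum_distrib_left)

lemma alg3: "(a::complex) * (c * (u - v)) = c * (a * u) - c * (a * v)"
  by (simp add: algebra_simps)

lemma full_zero:
  assumes herm: "hermitian_op d n H"
  shows "Re (\<Sum>a\<in>pauli_idx d n. cnj (pc d n Op a) * pc d n (Od d n H Op) a) = 0"
proof -
  let ?B = "qbasis d n"
  have hm: "\<And>a b. a \<in> ?B \<Longrightarrow> b \<in> ?B \<Longrightarrow> H a b = cnj (H b a)"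
    using herm unfolding hermitian_op_def by blast
  define L where "L = (\<Sum>x\<in>?B. \<Sum>z\<in>?B. cnj (Op x z) * (\<Sum>w\<in>?B. H x w * Op w z))"
  define R where "R = (\<Sum>x\<in>?B. \<Sum>z\<in>?B. cnj (Op x z) * (\<Sum>w\<in>?B. Op x w * H w z))"
  have L0: "Im L = 0" unfolding L_def by (rule real_left[OF hm])
  have R0: "Im R = 0" unfolding R_def by (rule real_right[OF hm])
  have "(\<Sum>a\<in>pauli_idx d n. cnj (pc d n Op a) * pc d n (Od d n H Op) a)
      = of_nat d ^ n * (\<Sum>x\<in>?B. \<Sum>z\<in>?B. cnj (Op x z) * Od d n H Op x z)"
    by (rule parseval_full)
  also have "(\<Sum>x\<in>?B. \<Sum>z\<in>?B. cnj (Op x z) * Od d n H Op x z) = - \<i> * L - - \<i> * R"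
    unfolding L_def R_def Od_def qmult_def
    by (simp only: alg3 sum_subtractf sum_distrib_left[symmetric])
  finally show ?thesis using L0 R0 by simp
qed

lemma restr_zero:
  assumes herm: "hermitian_op d n H" and act: "acts_on d n S H" and j: "j < n" "j \<notin> S"
  shows "Re (\<Sum>a\<in>PiE {..<n} (Wj d j). cnj (pc d n Op a) * pc d n (Od d n H Op) a) = 0"
proof -
  let ?X = "Xs d n j"
  have hm: "\<And>a b. a \<in> ?X \<Longrightarrow> b \<in> ?X \<Longrightarrow> H a b = cnj (H b a)"
    using herm unfolding hermitian_op_def Xs_def by blast
  define L where "L = (\<Sum>x\<in>?X. \<Sum>z\<in>?X. cnj (ptr d j Op x z) * (\<Sum>w\<in>?X. H x w * ptr d j Op w z))"
  define R where "R = (\<Sum>x\<in>?X. \<Sum>z\<in>?X. cnj (ptr d j Op x z) * (\<Sum>w\<in>?X. ptr d j Op x w * H w z))"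
  have L0: "Im L = 0" unfolding L_def by (rule real_left[OF hm])
  have R0: "Im R = 0" unfolding R_def by (rule real_right[OF hm])
  have "(\<Sum>a\<in>PiE {..<n} (Wj d j). cnj (pc d n Op a) * pc d n (Od d n H Op) a)
      = of_nat d ^ (n - 1) * (\<Sum>x\<in>?X. \<Sum>z\<in>?X. cnj (ptr d j Op x z) * ptr d j (Od d n H Op) x z)"
    by (rule parseval_restr[OF j(1)])
  also have "(\<Sum>x\<in>?X. \<Sum>z\<in>?X. cnj (ptr d j Op x z) * ptr d j (Od d n H Op) x z)
     = (\<Sum>x\<in>?X. \<Sum>z\<in>?X. cnj (ptr d j Op x z) * (- \<i> * ((\<Sum>w\<in>?X. H x w * ptr d j Op w z) - (\<Sum>w\<in>?X. ptr d j Op x w * H w z))))"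
    by (intro sum.cong refl) (simp add: ptr_Od ptr_HO[OF act j] ptr_OH[OF act j])
  also have "\<dots> = - \<i> * L - - \<i> * R"
    unfolding L_def R_def
    by (simp only: alg3 sum_subtractf sum_distrib_left[symmetric])
  finally show ?thesis using L0 R0 by simp
qed

lemma g_bound:
  assumes d0: "0 < d" and herm: "hermitian_op d n H" and hs: "hs_norm d n Op = 1"
  shows "(\<Sum>a\<in>pauli_idx d n. \<bar>2 * Re (cnj (pc d n Op a) * pc d n (Od d n H Op) a)\<bar>)
     \<le> 4 * (real d ^ n * real d ^ n) * op_norm d n H"
proof -
  let ?PI = "pauli_idx d n" and ?B = "qbasis d n"
  let ?c = "\<lambda>a. pc d n Op a" and ?h = "\<lambda>a. pc d n (qmult d n H Op) a" and ?o = "\<lambda>a. pc d n (qmult d n Op H) a"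
  define N where "N = real d ^ n"
  define on where "on = op_norm d n H"
  have on0: "0 \<le> on" unfolding on_def by (rule opnorm_facts(1)[OF d0])
  have N0: "0 \<le> N" unfolding N_def by simp
  have sO: "(\<Sum>x\<in>?B. \<Sum>z\<in>?B. (cmod (Op x z))\<^sup>2) = N" unfolding N_def by (rule hs_sum[OF hs d0])
  have Lc: "sqrt (\<Sum>a\<in>?PI. (cmod (?c a))\<^sup>2) = N"
    unfolding parseval_norm sO N_def[symmetric] using N0 by (simp add: power2_eq_square[symmetric])
  have Lh: "sqrt (\<Sum>a\<in>?PI. (cmod (?h a))\<^sup>2) \<le> N * on"
  proof -
    have hb: "(\<Sum>x\<in>?B. \<Sum>z\<in>?B. (cmod (qmult d n H Op x z))\<^sup>2) \<le> on\<^sup>2 * N"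
      using HO_bound[OF d0, where n=n and H=H and A=Op] unfolding sO on_def .
    have "(\<Sum>a\<in>?PI. (cmod (?h a))\<^sup>2) \<le> N * (on\<^sup>2 * N)"
      unfolding parseval_norm N_def[symmetric] by (rule mult_left_mono[OF hb N0])
    also have "\<dots> = (N * on)\<^sup>2" by (simp add: power2_eq_square)
    finally have "sqrt (\<Sum>a\<in>?PI. (cmod (?h a))\<^sup>2) \<le> sqrt ((N * on)\<^sup>2)" by (rule real_sqrt_le_mono)
    also have "sqrt ((N * on)\<^sup>2) = N * on" using N0 on0 by simp
    finally show ?thesis .
  qed
  have Lo: "sqrt (\<Sum>a\<in>?PI. (cmod (?o a))\<^sup>2) \<le> N * on"
  proof -
    have hb: "(\<Sum>x\<in>?B. \<Sum>z\<in>?B. (cmod (qmult d n Op H x z))\<^sup>2) \<le> on\<^sup>2 * N"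
      using OH_bound[OF d0 herm, of Op] unfolding sO on_def .
    have "(\<Sum>a\<in>?PI. (cmod (?o a))\<^sup>2) \<le> N * (on\<^sup>2 * N)"
      unfolding parseval_norm N_def[symmetric] by (rule mult_left_mono[OF hb N0])
    also have "\<dots> = (N * on)\<^sup>2" by (simp add: power2_eq_square)
    finally have "sqrt (\<Sum>a\<in>?PI. (cmod (?o a))\<^sup>2) \<le> sqrt ((N * on)\<^sup>2)" by (rule real_sqrt_le_mono)
    also have "sqrt ((N * on)\<^sup>2) = N * on" using N0 on0 by simp
    finally show ?thesis .
  qed
  have pt: "\<bar>2 * Re (cnj (?c a) * pc d n (Od d n H Op) a)\<bar> \<le> 2 * (cmod (?c a) * cmod (?h a)) + 2 * (cmod (?c a) * cmod (?o a))" for a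
  proof -
    have "\<bar>Re (cnj (?c a) * pc d n (Od d n H Op) a)\<bar> \<le> cmod (cnj (?c a) * pc d n (Od d n H Op) a)"
      by (rule abs_Re_le_cmod)
    also have "\<dots> = cmod (?c a) * cmod (?h a - ?o a)"
      by (simp add: pc_Od norm_mult)
    also have "\<dots> \<le> cmod (?c a) * (cmod (?h a) + cmod (?o a))"
      by (intro mult_left_mono norm_triangle_ineq4) auto
    finally show ?thesis by (simp add: algebra_simps)
  qed
  have "(\<Sum>a\<in>?PI. \<bar>2 * Re (cnj (?c a) * pc d n (Od d n H Op) a)\<bar>)
      \<le> (\<Sum>a\<in>?PI. 2 * (cmod (?c a) * cmod (?h a)) + 2 * (cmod (?c a) * cmod (?o a)))"
    by (rule sum_mono) (rule pt)
  also have "\<dots> = 2 * (\<Sum>a\<in>?PI. cmod (?c a) * cmod (?h a)) + 2 * (\<Sum>a\<in>?PI. cmod (?c a) * cmod (?o a))"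
    by (simp add: sum.distrib sum_distrib_left)
  also have "\<dots> \<le> 2 * (N * (N * on)) + 2 * (N * (N * on))"
  proof -
    have "(\<Sum>a\<in>?PI. cmod (?c a) * cmod (?h a)) \<le> N * (N * on)"
      using order_trans[OF cs_bound[of ?c ?h ?PI]] Lc mult_left_mono[OF Lh N0] by simp
    moreover have "(\<Sum>a\<in>?PI. cmod (?c a) * cmod (?o a)) \<le> N * (N * on)"
      using order_trans[OF cs_bound[of ?c ?o ?PI]] Lc mult_left_mono[OF Lo N0] by simp
    ultimately show ?thesis by linarith
  qed
  also have "\<dots> = 4 * (real d ^ n * real d ^ n) * op_norm d n H"
    unfolding N_def on_def by (simp add: algebra_simps)
  finally show ?thesis .
qed

lemma mult_if01: "(if P then 1 else 0) * (x::real) = (if P then x else 0)"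
  by simp

theorem mainTheorem6:
  fixes d n k :: nat and S :: "nat set" and H Op :: qop
  assumes "d \<ge> 2" and "n \<ge> 1"
    and "hermitian_op d n H"
    and "S \<subseteq> {..<n}" and "card S = k" and "acts_on d n S H"
    and "hs_norm d n Op = 1"
  shows "\<bar>influence_rate d n H Op\<bar> \<le> 4 * real k * op_norm d n H"
proof -
  have d0: "0 < d" using assms(1) by simp
  note herm = assms(3)
  let ?PI = "pauli_idx d n"
  define g where "g a = 2 * Re (cnj (pc d n Op a) * pc d n (Od d n H Op) a)" for a
  define D where "D = real d ^ (2 * n)"
  have DN: "D = real d ^ n * real d ^ n" by (simp add: D_def mult_2 power_add)
  have Dpos: "D > 0" using d0 by (simp add: D_def)
  define s where "s j = (\<Sum>a\<in>{a\<in>?PI. a j \<noteq> (0,0)}. g a)" for j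
  have fin: "finite ?PI" by (simp add: pauli_idx_def finite_PiE)
  have R: "influence_rate d n H Op = (\<Sum>j<n. s j / D)"
  proof -
    have "influence_rate d n H Op = (\<Sum>a\<in>?PI. real (pweight n a) * (g a / D))"
      unfolding rate_formula[OF herm] g_def D_def ..
    also have "\<dots> = (\<Sum>a\<in>?PI. \<Sum>j<n. (if a j \<noteq> (0,0) then 1 else 0) * (g a / D))"
      by (simp only: pweight_sum sum_distrib_right)
    also have "\<dots> = (\<Sum>j<n. \<Sum>a\<in>?PI. (if a j \<noteq> (0,0) then 1 else 0) * (g a / D))"
      by (rule sum.swap)
    also have "\<dots> = (\<Sum>j<n. s j / D)"
      unfolding s_def mult_if01 sum_divide_distrib by (rule sum.cong[OF refl], rule sum.inter_filter[OF fin, symmetric])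
    finally show ?thesis .
  qed
  have s0: "s j = 0" if j: "j < n" "j \<notin> S" for j
  proof -
    have sub: "{a\<in>?PI. a j = (0,0)} \<subseteq> ?PI" by auto
    have "{a\<in>?PI. a j \<noteq> (0,0)} = ?PI - {a\<in>?PI. a j = (0,0)}" by auto
    then have "s j = (\<Sum>a\<in>?PI. g a) - (\<Sum>a\<in>{a\<in>?PI. a j = (0,0)}. g a)"
      unfolding s_def using sum_diff[OF fin sub] by simp
    also have "(\<Sum>a\<in>?PI. g a) = 0"
      unfolding g_def sum_g using full_zero[OF herm] by simp
    also have "(\<Sum>a\<in>{a\<in>?PI. a j = (0,0)}. g a) = 0"
      unfolding g_def sum_g PiE_Wj[OF j(1) d0, symmetric] using restr_zero[OF herm assms(6) j] by simp
    finally show ?thesis by simp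
  qed
  have sb: "\<bar>s j\<bar> \<le> 4 * D * op_norm d n H" for j
  proof -
    have "\<bar>s j\<bar> \<le> (\<Sum>a\<in>{a\<in>?PI. a j \<noteq> (0,0)}. \<bar>g a\<bar>)" unfolding s_def by (rule sum_abs)
    also have "\<dots> \<le> (\<Sum>a\<in>?PI. \<bar>g a\<bar>)" by (rule sum_mono2[OF fin]) auto
    also have "\<dots> \<le> 4 * D * op_norm d n H" unfolding g_def DN by (rule g_bound[OF d0 herm assms(7)])
    finally show ?thesis .
  qed
  have "influence_rate d n H Op = (\<Sum>j\<in>S. s j / D)"
    unfolding R by (rule sum.mono_neutral_right) (use assms(4) s0 in auto)
  then have "\<bar>influence_rate d n H Op\<bar> \<le> (\<Sum>j\<in>S. \<bar>s j / D\<bar>)"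
    by (simp only: sum_abs)
  also have "\<dots> \<le> (\<Sum>j\<in>S. 4 * op_norm d n H)"
  proof (rule sum_mono)
    fix j
    have "\<bar>s j / D\<bar> = \<bar>s j\<bar> / D" using Dpos by simp
    also have "\<dots> \<le> 4 * D * op_norm d n H / D" using Dpos by (intro divide_right_mono sb) simp
    also have "\<dots> = 4 * op_norm d n H" using Dpos by simp
    finally show "\<bar>s j / D\<bar> \<le> 4 * op_norm d n H" .
  qed
  also have "\<dots> = 4 * real k * op_norm d n H" using assms(5) by simp
  finally show ?thesis .
qed

end
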